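(* Assume the linear payoff assumption and the rank condition $\operatorname{rank}\begin{bmatrix}A(\nu^* )\\ B(\mu^* )\end{bmatrix}=d$. Let $\epsilon_1,\epsilon_2>0$ with $\epsilon_1<\min_{a}\mu^*(a)$ and $\epsilon_2<\min_b\nu^*(b)$. Let $\widehat\mu\in\Delta(\mathcal A)$ and $\widehat\nu\in\Delta(\mathcal B)$ satisfy $\mathrm{TV}(\widehat\mu,\mu^* )\le\epsilon_1/2$ and $\mathrm{TV}(\widehat\nu,\nu^* )\le\epsilon_2/2$. Let $$\widehat\theta\in\arg\min_{\theta\in\mathbb{R}^d}\Big\|\begin{bmatrix}A(\widehat\nu)\\ B(\widehat\mu)\end{bmatrix}\theta-\begin{bmatrix}c(\widehat\mu)\\ d(\widehat\nu)\end{bmatrix}\Big\|^2 .$$ Then there exist constants $\epsilon_0,C>0$, depending only on $\phi,\eta,\mu^*,\nu^*$, with the following property. If $\epsilon_1,\epsilon_2\le\epsilon_0$, then the least-squares minimizer is unique and $$\|\widehat\theta-\theta^*\|^2\le C\Big(\epsilon_1^2\big(1+m(\epsilon_2^2+1)\big)+\epsilon_2^2\big(1+n(\epsilon_1^2+1)\big)\Big).$$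
   Context: Let $m,n\ge 2$, $\mathcal A=\{1,\dots,m\}$, $\mathcal B=\{1,\dots,n\}$, and $\eta>0$. For a payoff matrix $Q\in\mathbb{R}^{m\times n}$, the entropy-regularized zero-sum matrix game is $$\max_{\mu\in\Delta(\mathcal A)}\min_{\nu\in\Delta(\mathcal B)}\ \mu^\top Q\nu+\eta^{-1}\mathcal H(\mu)-\eta^{-1}\mathcal H(\nu),\qquad \mathcal H(\pi)=-\sum_i\pi_i\log\pi_i .$$ Its unique saddle point, the quantal response equilibrium (QRE) $(\mu,\nu)$, is characterized by $$\mu(a)=\frac{\exp\big(\eta\sum_b Q(a,b)\nu(b)\big)}{\sum_{a'}\exp\big(\eta\sum_bQ(a',b)\nu(b)\big)},\qquad \nu(b)=\frac{\exp\big(-\eta\sum_a Q(a,b)\mu(a)\big)}{\sum_{b'}\exp\big(-\eta\sum_aQ(a,b')\mu(a)\big)}.$$ Linear payoff assumption: there are a feature map $\phi:\mathcal A\times\mathcal B\to\mathbb{R}^d$ and $\theta^*\in\mathbb{R}^d$ with $\|\theta^*\|^2\le M$ such that $Q(a,b)=\langle\phi(a,b),\theta^*\rangle$ for all $(a,b)$. $(\mu^*,\nu^* )$ denotes the QRE of this $Q$; all its entries are positive. For $\mu\in\Delta(\mathcal A)$ and $\nu\in\Delta(\mathcal B)$ with positive entries, define: - $A(\nu)\in\mathbb{R}^{(m-1)\times d}$, whose row indexed by $a=2,\dots,m$ is $\sum_{b}\nu(b)\,(\phi(a,b)-\phi(1,b))^\top$; - $B(\mu)\in\mathbb{R}^{(n-1)\times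 d}$, whose row indexed by $b=2,\dots,n$ is $\sum_a\mu(a)\,(\phi(a,b)-\phi(a,1))^\top$; - $c(\mu)=\big(\eta^{-1}\log(\mu(a)/\mu(1))\big)_{a=2}^m\in\mathbb{R}^{m-1}$; - $d(\nu)=\big(-\eta^{-1}\log(\nu(b)/\nu(1))\big)_{b=2}^n\in\mathbb{R}^{n-1}$. $\mathrm{TV}(\mu,\mu')=\tfrac12\|\mu-\mu'\|_1$. *)

theory Defs
  imports Complex_Main "Jordan_Normal_Form.Matrix" "Jordan_Normal_Form.DL_Rank"
begin

text \<open>Action sets are {1..m} and {1..n}; distributions are functions nat => real,
  only their values on the action set matter. Feature map phi a b is a vector in R^d
  (a JNF vector of dimension d).\<close>

definition simplex :: "nat \<Rightarrow> (nat \<Rightarrow> real) \<Rightarrow> bool" where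
  "simplex k p \<longleftrightarrow> (\<forall>i\<in>{1..k}. 0 \<le> p i) \<and> (\<Sum>i\<in>{1..k}. p i) = 1"

definition TV :: "nat \<Rightarrow> (nat \<Rightarrow> real) \<Rightarrow> (nat \<Rightarrow> real) \<Rightarrow> real" where
  "TV k p q = (1/2) * (\<Sum>i\<in>{1..k}. \<bar>p i - q i\<bar>)"

definition is_QRE :: "nat \<Rightarrow> nat \<Rightarrow> real \<Rightarrow> (nat \<Rightarrow> nat \<Rightarrow> real)
    \<Rightarrow> (nat \<Rightarrow> real) \<Rightarrow> (nat \<Rightarrow> real) \<Rightarrow> bool" where
  "is_QRE m n \<eta> Q \<mu> \<nu> \<longleftrightarrow> simplex m \<mu> \<and> simplex n \<nu> \<and>
     (\<forall>a\<in>{1..m}. \<mu> a = exp (\<eta> * (\<Sum>b\<in>{1..n}. Q a b * \<nu> b)) /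
        (\<Sum>a'\<in>{1..m}. exp (\<eta> * (\<Sum>b\<in>{1..n}. Q a' b * \<nu> b)))) \<and>
     (\<forall>b\<in>{1..n}. \<nu> b = exp (- \<eta> * (\<Sum>a\<in>{1..m}. Q a b * \<mu> a)) /
        (\<Sum>b'\<in>{1..n}. exp (- \<eta> * (\<Sum>a\<in>{1..m}. Q a b' * \<mu> a))))"

text \<open>A(nu): row i (i = 0..m-2) corresponds to action a = i+2.\<close>
definition matA :: "nat \<Rightarrow> nat \<Rightarrow> nat \<Rightarrow> (nat \<Rightarrow> nat \<Rightarrow> real vec) \<Rightarrow> (nat \<Rightarrow> real) \<Rightarrow> real mat" where
  "matA m n d \<phi> \<nu> = mat (m - 1) d (\<lambda>(i, j). \<Sum>b\<in>{1..n}. \<nu> b * (\<phi> (i + 2) b $ j - \<phi> 1 b $ j))"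

text \<open>B(mu): row i (i = 0..n-2) corresponds to action b = i+2.\<close>
definition matB :: "nat \<Rightarrow> nat \<Rightarrow> nat \<Rightarrow> (nat \<Rightarrow> nat \<Rightarrow> real vec) \<Rightarrow> (nat \<Rightarrow> real) \<Rightarrow> real mat" where
  "matB m n d \<phi> \<mu> = mat (n - 1) d (\<lambda>(i, j). \<Sum>a\<in>{1..m}. \<mu> a * (\<phi> a (i + 2) $ j - \<phi> a 1 $ j))"

definition vecc :: "nat \<Rightarrow> real \<Rightarrow> (nat \<Rightarrow> real) \<Rightarrow> real vec" where
  "vecc m \<eta> \<mu> = vec (m - 1) (\<lambda>i. ln (\<mu> (i + 2) / \<mu> 1) / \<eta>)"

definition vecd :: "nat \<Rightarrow> real \<Rightarrow> (nat \<Rightarrow> real) \<Rightarrow> real vec" where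
  "vecd n \<eta> \<nu> = vec (n - 1) (\<lambda>i. - (ln (\<nu> (i + 2) / \<nu> 1) / \<eta>))"

definition sqnorm :: "real vec \<Rightarrow> real" where
  "sqnorm v = (\<Sum>i<dim_vec v. (v $ i)^2)"

definition lsq_obj :: "nat \<Rightarrow> nat \<Rightarrow> nat \<Rightarrow> real \<Rightarrow> (nat \<Rightarrow> nat \<Rightarrow> real vec)
    \<Rightarrow> (nat \<Rightarrow> real) \<Rightarrow> (nat \<Rightarrow> real) \<Rightarrow> real vec \<Rightarrow> real" where
  "lsq_obj m n d \<eta> \<phi> \<mu> \<nu> \<theta> =
     sqnorm (((matA m n d \<phi> \<nu>) @\<^sub>r (matB m n d \<phi> \<mu>)) *\<^sub>v \<theta> - (vecc m \<eta> \<mu> @\<^sub>v vecd n \<eta> \<nu>))"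

definition is_lsq_min :: "nat \<Rightarrow> nat \<Rightarrow> nat \<Rightarrow> real \<Rightarrow> (nat \<Rightarrow> nat \<Rightarrow> real vec)
    \<Rightarrow> (nat \<Rightarrow> real) \<Rightarrow> (nat \<Rightarrow> real) \<Rightarrow> real vec \<Rightarrow> bool" where
  "is_lsq_min m n d \<eta> \<phi> \<mu> \<nu> \<theta> \<longleftrightarrow> \<theta> \<in> carrier_vec d \<and>
     (\<forall>\<theta>'\<in>carrier_vec d. lsq_obj m n d \<eta> \<phi> \<mu> \<nu> \<theta> \<le> lsq_obj m n d \<eta> \<phi> \<mu> \<nu> \<theta>')"

end

theory Submission
  imports Defs
begin

lemma sq_sum_le: "((a::real)+b)^2 \<le> 2*a^2+2*b^2"
proof - have "0 \<le> (a-b)^2" by simp thus ?thesis by (simp add: power2_eq_square algebra_simps) qed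
lemma prod_le_sq: "(a::real)*b \<le> (a^2+b^2)/2"
proof - have "0 \<le> (a-b)^2" by simp thus ?thesis by (simp add: power2_eq_square algebra_simps) qed

lemma sum_sq_le_card:
  fixes x :: "nat \<Rightarrow> real"
  shows "(\<Sum>j<c. x j)^2 \<le> real c * (\<Sum>j<c. (x j)^2)"
proof -
  have "(\<Sum>j<c. x j)^2 = (\<Sum>j<c. \<Sum>k<c. x j * x k)"
    by (simp add: power2_eq_square sum_product)
  also have "\<dots> \<le> (\<Sum>j<c. \<Sum>k<c. ((x j)^2 + (x k)^2)/2)"
    by (intro sum_mono prod_le_sq)
  also have "\<dots> = real c * (\<Sum>j<c. (x j)^2)"
    by (simp add: sum.distrib sum_divide_distrib[symmetric] sum_distrib_left[symmetric] add_divide_distrib)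
  finally show ?thesis .
qed

lemma sqnorm_scalar: "sqnorm v = v \<bullet> v"
  unfolding sqnorm_def scalar_prod_def by (simp add: atLeast0LessThan power2_eq_square)

lemma sqnorm_nonneg: "0 \<le> sqnorm v"
  unfolding sqnorm_def by (simp add: sum_nonneg)

lemma sqnorm_zero_iff: "sqnorm v = 0 \<longleftrightarrow> v = 0\<^sub>v (dim_vec v)"
proof
  assume "sqnorm v = 0"
  then have "\<forall>i\<in>{..<dim_vec v}. (v $ i)^2 = 0"
    unfolding sqnorm_def by (subst sum_nonneg_eq_0_iff[symmetric]) auto
  then show "v = 0\<^sub>v (dim_vec v)" by (intro eq_vecI) auto
next
  assume h: "v = 0\<^sub>v (dim_vec v)"
  have "\<And>i. i < dim_vec v \<Longrightarrow> v $ i = 0" by (subst h) simp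
  then show "sqnorm v = 0" unfolding sqnorm_def
    by (auto intro!: sum.neutral)
qed

lemma sqnorm_append: "sqnorm (v @\<^sub>v w) = sqnorm v + sqnorm w"
proof -
  have "sqnorm (v @\<^sub>v w) = (\<Sum>i<dim_vec v + dim_vec w. ((v @\<^sub>v w) $ i)^2)"
    unfolding sqnorm_def by simp
  also have "\<dots> = (\<Sum>i<dim_vec v. ((v @\<^sub>v w) $ i)^2) + (\<Sum>i=dim_vec v..<dim_vec v + dim_vec w. ((v @\<^sub>v w) $ i)^2)"
    using sum.atLeastLessThan_concat[of 0 "dim_vec v" "dim_vec v + dim_vec w" "\<lambda>i. ((v @\<^sub>v w) $ i)^2"]
    by (simp add: atLeast0LessThan)
  also have "(\<Sum>i<dim_vec v. ((v @\<^sub>v w) $ i)^2) = sqnorm v"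
    unfolding sqnorm_def by (intro sum.cong) auto
  also have "(\<Sum>i=dim_vec v..<dim_vec v + dim_vec w. ((v @\<^sub>v w) $ i)^2) = (\<Sum>i<dim_vec w. ((v @\<^sub>v w) $ (i + dim_vec v))^2)"
    using sum.shift_bounds_nat_ivl[of "\<lambda>i. ((v @\<^sub>v w) $ i)^2" 0 "dim_vec v" "dim_vec w"]
    by (simp add: atLeast0LessThan add.commute)
  also have "\<dots> = sqnorm w"
    unfolding sqnorm_def by (intro sum.cong) auto
  finally show ?thesis .
qed

lemma sqnorm_tri:
  assumes "x \<in> carrier_vec r" "y \<in> carrier_vec r" "z \<in> carrier_vec r"
  shows "sqnorm (x - z) \<le> 2 * sqnorm (x - y) + 2 * sqnorm (y - z)"
proof -
  have "sqnorm (x - z) = (\<Sum>i<r. (x$i - z$i)^2)" unfolding sqnorm_def using assms by simp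
  also have "\<dots> \<le> (\<Sum>i<r. 2 * (x$i - y$i)^2 + 2 * (y$i - z$i)^2)"
    apply (intro sum_mono)
    using sq_sum_le[of "x$i - y$i" "y$i - z$i" for i] by simp
  also have "\<dots> = 2 * sqnorm (x - y) + 2 * sqnorm (y - z)"
    unfolding sqnorm_def using assms by (simp add: sum.distrib sum_distrib_left)
  finally show ?thesis .
qed

lemma sqnorm_minus_comm:
  assumes "x \<in> carrier_vec r" "y \<in> carrier_vec r"
  shows "sqnorm (x - y) = sqnorm (y - x)"
  unfolding sqnorm_def using assms by (intro sum.cong) (auto simp: power2_commute)

lemma sqnorm_add:
  assumes "u \<in> carrier_vec r" "w \<in> carrier_vec r"
  shows "sqnorm (u + w) = sqnorm u + sqnorm w + 2 * (u \<bullet> w)"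
proof -
  have "sqnorm (u + w) = (\<Sum>i<r. (u$i)^2 + (w$i)^2 + 2 * (u$i * w$i))"
    unfolding sqnorm_def using assms by (intro sum.cong) (auto simp: power2_sum)
  also have "\<dots> = sqnorm u + sqnorm w + 2 * (u \<bullet> w)"
    unfolding sqnorm_def scalar_prod_def using assms
    by (simp add: sum.distrib sum_distrib_left atLeast0LessThan)
  finally show ?thesis .
qed

lemma entry_bound_vec:
  assumes "v \<in> carrier_vec r" "w \<in> carrier_vec r" "\<And>i. i < r \<Longrightarrow> \<bar>v$i - w$i\<bar> \<le> e"
  shows "sqnorm (v - w) \<le> real r * e^2"
proof -
  have "sqnorm (v - w) = (\<Sum>i<r. (v$i - w$i)^2)" unfolding sqnorm_def using assms by simp
  also have "\<dots> \<le> (\<Sum>i<r. e^2)"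
    apply (intro sum_mono)
  proof -
    fix i assume "i \<in> {..<r}"
    then have "\<bar>v$i - w$i\<bar> \<le> e" using assms(3) by auto
    then have "\<bar>v$i - w$i\<bar>^2 \<le> e^2" by (intro power_mono) auto
    then show "(v$i - w$i)^2 \<le> e^2" by simp
  qed
  finally show ?thesis by simp
qed

lemma entry_bound_mat:
  assumes A: "A \<in> carrier_mat r c" and A0: "A0 \<in> carrier_mat r c" and th: "\<theta> \<in> carrier_vec c"
    and e: "\<And>i j. i < r \<Longrightarrow> j < c \<Longrightarrow> \<bar>A$$(i,j) - A0$$(i,j)\<bar> \<le> e"
  shows "sqnorm (A *\<^sub>v \<theta> - A0 *\<^sub>v \<theta>) \<le> real r * real c * e^2 * sqnorm \<theta>"
proof -
  have "sqnorm (A *\<^sub>v \<theta> - A0 *\<^sub>v \<theta>) = (\<Sum>i<r. (\<Sum>j<c. (A$$(i,j) - A0$$(i,j)) * \<theta>$j)^2)"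
    unfolding sqnorm_def using assms
    by (intro sum.cong) (auto simp: scalar_prod_def atLeast0LessThan sum_subtractf[symmetric] left_diff_distrib)
  also have "\<dots> \<le> (\<Sum>i<r. real c * e^2 * sqnorm \<theta>)"
  proof (intro sum_mono)
    fix i assume i: "i \<in> {..<r}"
    have "(\<Sum>j<c. (A$$(i,j) - A0$$(i,j)) * \<theta>$j)^2 \<le> real c * (\<Sum>j<c. ((A$$(i,j) - A0$$(i,j)) * \<theta>$j)^2)"
      by (rule sum_sq_le_card)
    also have "\<dots> \<le> real c * (\<Sum>j<c. e^2 * (\<theta>$j)^2)"
    proof (intro mult_left_mono sum_mono)
      fix j assume j: "j \<in> {..<c}"
      have "\<bar>A$$(i,j) - A0$$(i,j)\<bar>^2 \<le> e^2"
        using e[of i j] i j by (intro power_mono) auto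
      then show "((A$$(i,j) - A0$$(i,j)) * \<theta>$j)^2 \<le> e^2 * (\<theta>$j)^2"
        by (simp add: power_mult_distrib mult_right_mono)
    qed auto
    also have "\<dots> = real c * (e^2 * sqnorm \<theta>)"
      unfolding sqnorm_def carrier_vecD[OF th] sum_distrib_left ..
    also have "\<dots> = real c * e^2 * sqnorm \<theta>" by simp
    finally show "(\<Sum>j<c. (A$$(i,j) - A0$$(i,j)) * \<theta>$j)^2 \<le> real c * e^2 * sqnorm \<theta>" .
  qed
  finally show ?thesis by simp
qed

lemma (in vec_space) nd_low_rank:
  assumes "A \<in> carrier_mat n nc" and "\<not> distinct (cols A)"
  shows "rank A < nc"
proof -
  obtain S where "maximal S (\<lambda>T. T \<subseteq> set (cols A) \<and> lin_indpt T)"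
    using maximal_exists[of "(\<lambda>T. T \<subseteq> set (cols A) \<and> lin_indpt T)" "card (set (cols A))" "{}"]
    by (meson List.finite_set card_mono empty_iff empty_subsetI finite_lin_indpt2 rev_finite_subset)
  then have "card S \<le> card (set (cols A))" by (simp add: card_mono maximal_def)
  then have "card S < nc"
    using assms(1) cols_length card_length \<open>\<not> distinct (cols A)\<close> card_distinct carrier_matD(2) nat_less_le
    by (metis dual_order.antisym dual_order.trans)
  then show ?thesis
    using rank_card_indpt[OF \<open>A \<in> carrier_mat n nc\<close> \<open>maximal S (\<lambda>T. T \<subseteq> set (cols A) \<and> lin_indpt T)\<close>]
    by simp
qed

lemma rank_inj:
  fixes K :: "real mat"
  assumes K: "K \<in> carrier_mat N d" and r: "vec_space.rank N K = d"
  shows "\<forall>v\<in>carrier_vec d. K *\<^sub>v v = 0\<^sub>v N \<longrightarrow> v = 0\<^sub>v d"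
proof (intro ballI impI, rule ccontr)
  fix v :: "real vec" assume v: "v \<in> carrier_vec d" and Kv: "K *\<^sub>v v = 0\<^sub>v N" and nz: "v \<noteq> 0\<^sub>v d"
  have dist: "distinct (cols K)"
  proof (rule ccontr)
    assume "\<not> distinct (cols K)"
    then have "vec_space.rank N K < d" using vec_space.nd_low_rank[OF K] by blast
    then show False using r by simp
  qed
  have "\<not> module.lin_dep class_ring (module_vec TYPE(real) N) (set (cols K))"
    using vec_space.full_rank_lin_indpt[OF K r dist] .
  moreover have "module.lin_dep class_ring (module_vec TYPE(real) N) (set (cols K))"
    using vec_space.lin_depI[OF K v nz Kv dist] .
  ultimately show False by blast
qed

lemma inj_ginv:
  fixes K :: "real mat"
  assumes K: "K \<in> carrier_mat N d" and inj: "\<forall>v\<in>carrier_vec d. K *\<^sub>v v = 0\<^sub>v N \<longrightarrow> v = 0\<^sub>v d"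
  shows "\<exists>Gi \<in> carrier_mat d d. Gi * (K\<^sup>T * K) = 1\<^sub>m d \<and> (K\<^sup>T * K) * Gi = 1\<^sub>m d"
proof -
  define G where "G = K\<^sup>T * K"
  have G: "G \<in> carrier_mat d d" unfolding G_def using K by auto
  have KT: "K\<^sup>T \<in> carrier_mat d N" using K by auto
  have det: "det G \<noteq> 0"
  proof
    assume "det G = 0"
    then obtain v where v: "v \<in> carrier_vec d" "v \<noteq> 0\<^sub>v d" "G *\<^sub>v v = 0\<^sub>v d"
      using det_0_iff_vec_prod_zero_field[OF G] by blast
    have Kv: "K *\<^sub>v v \<in> carrier_vec N" using K v by auto
    have "sqnorm (K *\<^sub>v v) = (K *\<^sub>v v) \<bullet> (K *\<^sub>v v)" by (rule sqnorm_scalar)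
    also have "\<dots> = (K\<^sup>T *\<^sub>v (K *\<^sub>v v)) \<bullet> v"
      using transpose_vec_mult_scalar[OF K v(1) Kv] by simp
    also have "K\<^sup>T *\<^sub>v (K *\<^sub>v v) = G *\<^sub>v v" unfolding G_def using K KT v by simp
    also have "(G *\<^sub>v v) \<bullet> v = 0" using v by simp
    finally have "K *\<^sub>v v = 0\<^sub>v N" using sqnorm_zero_iff[of "K *\<^sub>v v"] K by simp
    then show False using inj v by blast
  qed
  define Gi where "Gi = (1 / det G) \<cdot>\<^sub>m adj_mat G"
  have adj: "adj_mat G \<in> carrier_mat d d" "G * adj_mat G = det G \<cdot>\<^sub>m 1\<^sub>m d" "adj_mat G * G = det G \<cdot>\<^sub>m 1\<^sub>m d"
    using adj_mat[OF G] by auto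
  have Gi: "Gi \<in> carrier_mat d d" unfolding Gi_def using adj by simp
  have e: "(1 / det G) \<cdot>\<^sub>m (det G \<cdot>\<^sub>m 1\<^sub>m d) = (1\<^sub>m d :: real mat)"
    by (rule eq_matI) (use det in auto)
  have "Gi * G = 1\<^sub>m d" unfolding Gi_def using mult_smult_assoc_mat[OF adj(1) G] adj e by simp
  moreover have "G * Gi = 1\<^sub>m d" unfolding Gi_def using mult_smult_distrib[OF G adj(1)] adj e by simp
  ultimately show ?thesis using Gi unfolding G_def by blast
qed

lemma inj_lower_bound:
  fixes K :: "real mat"
  assumes K: "K \<in> carrier_mat N d" and inj: "\<forall>v\<in>carrier_vec d. K *\<^sub>v v = 0\<^sub>v N \<longrightarrow> v = 0\<^sub>v d"
  shows "\<exists>lam>0. \<forall>\<theta>\<in>carrier_vec d. lam * sqnorm \<theta> \<le> sqnorm (K *\<^sub>v \<theta>)"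
proof -
  obtain Gi where Gi: "Gi \<in> carrier_mat d d" "Gi * (K\<^sup>T * K) = 1\<^sub>m d"
    using inj_ginv[OF K inj] by blast
  define L where "L = Gi * K\<^sup>T"
  have KT: "K\<^sup>T \<in> carrier_mat d N" using K by auto
  have L: "L \<in> carrier_mat d N" unfolding L_def using Gi KT by auto
  have LK: "L * K = 1\<^sub>m d" unfolding L_def using Gi KT K by simp
  define e where "e = (\<Sum>i<d. \<Sum>j<N. \<bar>L$$(i,j)\<bar>)"
  have ebd: "\<bar>L$$(i,j) - (0\<^sub>m d N :: real mat)$$(i,j)\<bar> \<le> e" if "i < d" "j < N" for i j
  proof -
    have "\<bar>L$$(i,j)\<bar> \<le> (\<Sum>j<N. \<bar>L$$(i,j)\<bar>)"
      using that by (intro member_le_sum) auto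
    also have "\<dots> \<le> e" unfolding e_def
      using that by (intro member_le_sum[where f="\<lambda>i. \<Sum>j<N. \<bar>L$$(i,j)\<bar>"]) (auto intro: sum_nonneg)
    finally show ?thesis using that by simp
  qed
  define lam where "lam = 1 / (real d * real N * e^2 + 1)"
  have pos: "real d * real N * e^2 + 1 > 0" by (simp add: add_nonneg_pos)
  have "lam > 0" unfolding lam_def using pos by simp
  moreover have "lam * sqnorm \<theta> \<le> sqnorm (K *\<^sub>v \<theta>)" if th: "\<theta> \<in> carrier_vec d" for \<theta>
  proof -
    have Kt: "K *\<^sub>v \<theta> \<in> carrier_vec N" using K th by simp
    have "\<theta> = L *\<^sub>v (K *\<^sub>v \<theta>)"
      using LK L K th by (metis assoc_mult_mat_vec one_mult_mat_vec)
    moreover have "L *\<^sub>v (K *\<^sub>v \<theta>) - (0\<^sub>m d N) *\<^sub>v (K *\<^sub>v \<theta>) = L *\<^sub>v (K *\<^sub>v \<theta>)"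
      using L Kt by (intro eq_vecI) auto
    ultimately have "sqnorm \<theta> \<le> real d * real N * e^2 * sqnorm (K *\<^sub>v \<theta>)"
      using entry_bound_mat[OF L zero_carrier_mat Kt ebd] by simp
    then have "sqnorm \<theta> \<le> (real d * real N * e^2 + 1) * sqnorm (K *\<^sub>v \<theta>)"
      using sqnorm_nonneg[of "K *\<^sub>v \<theta>"] by (simp add: distrib_right)
    then show ?thesis unfolding lam_def using pos by (simp add: field_simps)
  qed
  ultimately show ?thesis by blast
qed

lemma lsq_unique:
  fixes K :: "real mat"
  assumes K: "K \<in> carrier_mat N d" and inj: "\<forall>v\<in>carrier_vec d. K *\<^sub>v v = 0\<^sub>v N \<longrightarrow> v = 0\<^sub>v d"
    and b: "b \<in> carrier_vec N"
  shows "\<exists>!\<theta>. \<theta> \<in> carrier_vec d \<and> (\<forall>\<theta>'\<in>carrier_vec d. sqnorm (K *\<^sub>v \<theta> - b) \<le> sqnorm (K *\<^sub>v \<theta>' - b))"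
proof -
  obtain Gi where Gi: "Gi \<in> carrier_mat d d" "(K\<^sup>T * K) * Gi = 1\<^sub>m d"
    using inj_ginv[OF K inj] by blast
  have KT: "K\<^sup>T \<in> carrier_mat d N" using K by auto
  define t0 where "t0 = Gi *\<^sub>v (K\<^sup>T *\<^sub>v b)"
  have t0: "t0 \<in> carrier_vec d" unfolding t0_def using Gi KT b by simp
  have KTb: "K\<^sup>T *\<^sub>v b \<in> carrier_vec d" using KT b by simp
  have Kt0: "K *\<^sub>v t0 \<in> carrier_vec N" using K t0 by simp
  have normal: "K\<^sup>T *\<^sub>v (K *\<^sub>v t0) = K\<^sup>T *\<^sub>v b"
  proof -
    have "K\<^sup>T *\<^sub>v (K *\<^sub>v t0) = (K\<^sup>T * K) *\<^sub>v t0" using KT K t0 by simp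
    also have "\<dots> = ((K\<^sup>T * K) * Gi) *\<^sub>v (K\<^sup>T *\<^sub>v b)" unfolding t0_def
      using KT K Gi KTb by (metis assoc_mult_mat_vec mult_carrier_mat)
    also have "\<dots> = K\<^sup>T *\<^sub>v b" using Gi KTb by simp
    finally show ?thesis .
  qed
  have ident: "sqnorm (K *\<^sub>v \<theta> - b) = sqnorm (K *\<^sub>v (\<theta> - t0)) + sqnorm (K *\<^sub>v t0 - b)"
    if th: "\<theta> \<in> carrier_vec d" for \<theta>
  proof -
    define u where "u = K *\<^sub>v (\<theta> - t0)"
    define w where "w = K *\<^sub>v t0 - b"
    have u': "u = K *\<^sub>v \<theta> - K *\<^sub>v t0" unfolding u_def using mult_minus_distrib_mat_vec[OF K th t0] .
    have u: "u \<in> carrier_vec N" unfolding u_def using K th t0 by simp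
    have w: "w \<in> carrier_vec N" unfolding w_def using Kt0 b by simp
    have sum: "K *\<^sub>v \<theta> - b = u + w" unfolding u' w_def using K th t0 b by (intro eq_vecI) auto
    have "K\<^sup>T *\<^sub>v w = K\<^sup>T *\<^sub>v (K *\<^sub>v t0) - K\<^sup>T *\<^sub>v b"
      unfolding w_def using mult_minus_distrib_mat_vec[OF KT Kt0 b] .
    also have "\<dots> = 0\<^sub>v d" unfolding normal using KTb by simp
    finally have KTw: "K\<^sup>T *\<^sub>v w = 0\<^sub>v d" .
    have "u \<bullet> w = w \<bullet> u" using comm_scalar_prod[OF u w] .
    also have "\<dots> = (K\<^sup>T *\<^sub>v w) \<bullet> (\<theta> - t0)" unfolding u_def
      using transpose_vec_mult_scalar[OF K _ w, of "\<theta> - t0"] th t0 by simp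
    also have "\<dots> = 0" unfolding KTw using th t0 by simp
    finally have "u \<bullet> w = 0" .
    then show ?thesis unfolding sum sqnorm_add[OF u w] unfolding u_def w_def by simp
  qed
  show ?thesis
  proof (rule ex1I[of _ t0])
    show "t0 \<in> carrier_vec d \<and> (\<forall>\<theta>'\<in>carrier_vec d. sqnorm (K *\<^sub>v t0 - b) \<le> sqnorm (K *\<^sub>v \<theta>' - b))"
    proof (intro conjI ballI t0)
      fix \<theta>' :: "real vec" assume "\<theta>' \<in> carrier_vec d"
      from ident[OF this] sqnorm_nonneg[of "K *\<^sub>v (\<theta>' - t0)"]
      show "sqnorm (K *\<^sub>v t0 - b) \<le> sqnorm (K *\<^sub>v \<theta>' - b)" by linarith
    qed
  next
    fix \<theta> assume h: "\<theta> \<in> carrier_vec d \<and> (\<forall>\<theta>'\<in>carrier_vec d. sqnorm (K *\<^sub>v \<theta> - b) \<le> sqnorm (K *\<^sub>v \<theta>' - b))"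
    then have th: "\<theta> \<in> carrier_vec d" by blast
    have "sqnorm (K *\<^sub>v \<theta> - b) \<le> sqnorm (K *\<^sub>v t0 - b)" using h t0 by blast
    then have "sqnorm (K *\<^sub>v (\<theta> - t0)) = 0" using ident[OF th] sqnorm_nonneg[of "K *\<^sub>v (\<theta> - t0)"] by linarith
    then have "K *\<^sub>v (\<theta> - t0) = 0\<^sub>v N" using sqnorm_zero_iff[of "K *\<^sub>v (\<theta> - t0)"] K by simp
    then have z: "\<theta> - t0 = 0\<^sub>v d" using inj th t0 by simp
    show "\<theta> = t0"
    proof (rule eq_vecI)
      fix i assume "i < dim_vec t0"
      then have "(\<theta> - t0) $ i = 0" using z t0 by simp
      then show "\<theta> $ i = t0 $ i" using \<open>i < dim_vec t0\<close> t0 th by simp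
    qed (use th t0 in simp)
  qed
qed

lemma swap_lemma:
  fixes f g :: "nat \<Rightarrow> nat \<Rightarrow> real" and \<nu> t :: "nat \<Rightarrow> real"
  shows "(\<Sum>j<d. (\<Sum>b\<in>B. \<nu> b * (f b j - g b j)) * t j)
       = (\<Sum>b\<in>B. (\<Sum>j<d. f b j * t j) * \<nu> b) - (\<Sum>b\<in>B. (\<Sum>j<d. g b j * t j) * \<nu> b)"
proof -
  have "(\<Sum>j<d. (\<Sum>b\<in>B. \<nu> b * (f b j - g b j)) * t j) = (\<Sum>j<d. \<Sum>b\<in>B. \<nu> b * (f b j - g b j) * t j)"
    by (simp add: sum_distrib_right)
  also have "\<dots> = (\<Sum>b\<in>B. \<Sum>j<d. \<nu> b * (f b j - g b j) * t j)"
    by (rule sum.swap)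
  also have "\<dots> = (\<Sum>b\<in>B. (\<Sum>j<d. f b j * t j) * \<nu> b - (\<Sum>j<d. g b j * t j) * \<nu> b)"
  proof (intro sum.cong refl)
    fix b
    have "(\<Sum>j<d. \<nu> b * (f b j - g b j) * t j) = (\<Sum>j<d. f b j * t j * \<nu> b - g b j * t j * \<nu> b)"
      by (intro sum.cong refl) (simp add: algebra_simps)
    also have "\<dots> = (\<Sum>j<d. f b j * t j * \<nu> b) - (\<Sum>j<d. g b j * t j * \<nu> b)"
      by (rule sum_subtractf)
    also have "\<dots> = (\<Sum>j<d. f b j * t j) * \<nu> b - (\<Sum>j<d. g b j * t j) * \<nu> b"
      by (simp add: sum_distrib_right)
    finally show "(\<Sum>j<d. \<nu> b * (f b j - g b j) * t j) = (\<Sum>j<d. f b j * t j) * \<nu> b - (\<Sum>j<d. g b j * t j) * \<nu> b" .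
  qed
  also have "\<dots> = (\<Sum>b\<in>B. (\<Sum>j<d. f b j * t j) * \<nu> b) - (\<Sum>b\<in>B. (\<Sum>j<d. g b j * t j) * \<nu> b)"
    by (rule sum_subtractf)
  finally show ?thesis .
qed

lemma ln_diff_bound:
  fixes x y q e :: real
  assumes "q > 0" "x \<ge> q" "y \<ge> q" "\<bar>x - y\<bar> \<le> e"
  shows "\<bar>ln x - ln y\<bar> \<le> e / q"
proof -
  have x: "x > 0" and y: "y > 0" using assms by auto
  have e: "e \<ge> 0" using assms(4) by linarith
  have 1: "ln x - ln y \<le> e / q"
  proof -
    have "ln x - ln y = ln (x / y)" using x y by (simp add: ln_div)
    also have "\<dots> \<le> x / y - 1" using x y by (intro ln_le_minus_one) simp
    also have "\<dots> = (x - y) / y" using y by (simp add: field_simps)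
    also have "\<dots> \<le> e / y" using assms(4) y by (intro divide_right_mono) auto
    also have "\<dots> \<le> e / q" using e assms(1,3) by (intro divide_left_mono) auto
    finally show ?thesis .
  qed
  have 2: "ln y - ln x \<le> e / q"
  proof -
    have "ln y - ln x = ln (y / x)" using x y by (simp add: ln_div)
    also have "\<dots> \<le> y / x - 1" using x y by (intro ln_le_minus_one) simp
    also have "\<dots> = (y - x) / x" using x by (simp add: field_simps)
    also have "\<dots> \<le> e / x" using assms(4) x by (intro divide_right_mono) auto
    also have "\<dots> \<le> e / q" using e assms(1,2) by (intro divide_left_mono) auto
    finally show ?thesis .
  qed
  show ?thesis using 1 2 by linarith
qed

lemma abs_sum_bound:
  fixes x y :: "nat \<Rightarrow> real"
  assumes "finite S" "\<And>b. b \<in> S \<Longrightarrow> \<bar>y b\<bar> \<le> Y"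
  shows "\<bar>\<Sum>b\<in>S. x b * y b\<bar> \<le> (\<Sum>b\<in>S. \<bar>x b\<bar>) * Y"
proof -
  have "\<bar>\<Sum>b\<in>S. x b * y b\<bar> \<le> (\<Sum>b\<in>S. \<bar>x b * y b\<bar>)" by (rule sum_abs)
  also have "\<dots> \<le> (\<Sum>b\<in>S. \<bar>x b\<bar> * Y)"
    using assms(2) by (intro sum_mono) (simp add: abs_mult mult_left_mono)
  also have "\<dots> = (\<Sum>b\<in>S. \<bar>x b\<bar>) * Y" by (simp add: sum_distrib_right)
  finally show ?thesis .
qed

lemma qre_pos:
  assumes q: "is_QRE m n \<eta> Q \<mu> \<nu>" and m: "m \<ge> 1" and n: "n \<ge> 1"
  shows "\<forall>a\<in>{1..m}. \<mu> a > 0" "\<forall>b\<in>{1..n}. \<nu> b > 0"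
proof -
  have Z1: "(\<Sum>a'\<in>{1..m}. exp (\<eta> * (\<Sum>b\<in>{1..n}. Q a' b * \<nu> b))) > 0"
    using m by (intro sum_pos) auto
  have Z2: "(\<Sum>b'\<in>{1..n}. exp (- \<eta> * (\<Sum>a\<in>{1..m}. Q a b' * \<mu> a))) > 0"
    using n by (intro sum_pos) auto
  have qa: "\<forall>a\<in>{1..m}. \<mu> a = exp (\<eta> * (\<Sum>b\<in>{1..n}. Q a b * \<nu> b)) /
        (\<Sum>a'\<in>{1..m}. exp (\<eta> * (\<Sum>b\<in>{1..n}. Q a' b * \<nu> b)))"
    using q unfolding is_QRE_def by blast
  have qb: "\<forall>b\<in>{1..n}. \<nu> b = exp (- \<eta> * (\<Sum>a\<in>{1..m}. Q a b * \<mu> a)) /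
        (\<Sum>b'\<in>{1..n}. exp (- \<eta> * (\<Sum>a\<in>{1..m}. Q a b' * \<mu> a)))"
    using q unfolding is_QRE_def by blast
  show "\<forall>a\<in>{1..m}. \<mu> a > 0" using qa Z1 by simp
  show "\<forall>b\<in>{1..n}. \<nu> b > 0" using qb Z2 by simp
qed

lemma qre_A:
  assumes q: "is_QRE m n \<eta> (\<lambda>a b. \<phi> a b \<bullet> \<theta>s) \<mu> \<nu>" and m: "m \<ge> 1" and n: "n \<ge> 1"
    and eta: "\<eta> > 0" and th: "\<theta>s \<in> carrier_vec d"
  shows "matA m n d \<phi> \<nu> *\<^sub>v \<theta>s = vecc m \<eta> \<mu>"
proof (rule eq_vecI)
  show "dim_vec (matA m n d \<phi> \<nu> *\<^sub>v \<theta>s) = dim_vec (vecc m \<eta> \<mu>)"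
    unfolding matA_def vecc_def by simp
  fix i assume "i < dim_vec (vecc m \<eta> \<mu>)"
  then have i: "i < m - 1" unfolding vecc_def by simp
  define s where "s a = (\<Sum>b\<in>{1..n}. (\<phi> a b \<bullet> \<theta>s) * \<nu> b)" for a
  define Z where "Z = (\<Sum>a'\<in>{1..m}. exp (\<eta> * s a'))"
  have Z: "Z > 0" unfolding Z_def using m by (intro sum_pos) auto
  have qa: "\<forall>a\<in>{1..m}. \<mu> a = exp (\<eta> * (\<Sum>b\<in>{1..n}. (\<phi> a b \<bullet> \<theta>s) * \<nu> b)) /
        (\<Sum>a'\<in>{1..m}. exp (\<eta> * (\<Sum>b\<in>{1..n}. (\<phi> a' b \<bullet> \<theta>s) * \<nu> b)))"
    using q unfolding is_QRE_def by blast
  have mu: "\<mu> a = exp (\<eta> * s a) / Z" if "a \<in> {1..m}" for a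
    using qa that unfolding s_def Z_def by blast
  have a2: "i + 2 \<in> {1..m}" and a1: "1 \<in> {1..m}" using i m by auto
  have "\<mu> (i + 2) / \<mu> 1 = exp (\<eta> * s (i+2)) / exp (\<eta> * s 1)"
    unfolding mu[OF a2] mu[OF a1] using Z by simp
  also have "\<dots> = exp (\<eta> * s (i+2) - \<eta> * s 1)" by (rule exp_diff[symmetric])
  finally have r: "ln (\<mu> (i + 2) / \<mu> 1) / \<eta> = s (i+2) - s 1"
    using eta by (simp add: field_simps)
  have "(matA m n d \<phi> \<nu> *\<^sub>v \<theta>s) $ i = (\<Sum>j<d. (\<Sum>b\<in>{1..n}. \<nu> b * (\<phi> (i + 2) b $ j - \<phi> 1 b $ j)) * \<theta>s $ j)"
    unfolding matA_def using i th by (simp add: scalar_prod_def atLeast0LessThan)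
  also have "\<dots> = s (i+2) - s 1"
    unfolding swap_lemma s_def scalar_prod_def using th by (simp add: atLeast0LessThan)
  finally show "(matA m n d \<phi> \<nu> *\<^sub>v \<theta>s) $ i = vecc m \<eta> \<mu> $ i"
    unfolding vecc_def using i r by simp
qed

lemma qre_B:
  assumes q: "is_QRE m n \<eta> (\<lambda>a b. \<phi> a b \<bullet> \<theta>s) \<mu> \<nu>" and m: "m \<ge> 1" and n: "n \<ge> 1"
    and eta: "\<eta> > 0" and th: "\<theta>s \<in> carrier_vec d"
  shows "matB m n d \<phi> \<mu> *\<^sub>v \<theta>s = vecd n \<eta> \<nu>"
proof (rule eq_vecI)
  show "dim_vec (matB m n d \<phi> \<mu> *\<^sub>v \<theta>s) = dim_vec (vecd n \<eta> \<nu>)"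
    unfolding matB_def vecd_def by simp
  fix i assume "i < dim_vec (vecd n \<eta> \<nu>)"
  then have i: "i < n - 1" unfolding vecd_def by simp
  define s where "s b = (\<Sum>a\<in>{1..m}. (\<phi> a b \<bullet> \<theta>s) * \<mu> a)" for b
  define Z where "Z = (\<Sum>b'\<in>{1..n}. exp (- \<eta> * s b'))"
  have Z: "Z > 0" unfolding Z_def using n by (intro sum_pos) auto
  have qb: "\<forall>b\<in>{1..n}. \<nu> b = exp (- \<eta> * (\<Sum>a\<in>{1..m}. (\<phi> a b \<bullet> \<theta>s) * \<mu> a)) /
        (\<Sum>b'\<in>{1..n}. exp (- \<eta> * (\<Sum>a\<in>{1..m}. (\<phi> a b' \<bullet> \<theta>s) * \<mu> a)))"
    using q unfolding is_QRE_def by blast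
  have nu: "\<nu> b = exp (- \<eta> * s b) / Z" if "b \<in> {1..n}" for b
    using qb that unfolding s_def Z_def by blast
  have a2: "i + 2 \<in> {1..n}" and a1: "1 \<in> {1..n}" using i n by auto
  have "\<nu> (i + 2) / \<nu> 1 = exp (- \<eta> * s (i+2)) / exp (- \<eta> * s 1)"
    unfolding nu[OF a2] nu[OF a1] using Z by (simp add: exp_minus field_simps)
  also have "\<dots> = exp (- \<eta> * s (i+2) - (- \<eta> * s 1))" by (rule exp_diff[symmetric])
  finally have r: "- (ln (\<nu> (i + 2) / \<nu> 1) / \<eta>) = s (i+2) - s 1"
    using eta by (simp add: field_simps)
  have "(matB m n d \<phi> \<mu> *\<^sub>v \<theta>s) $ i = (\<Sum>j<d. (\<Sum>a\<in>{1..m}. \<mu> a * (\<phi> a (i + 2) $ j - \<phi> a 1 $ j)) * \<theta>s $ j)"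
    unfolding matB_def using i th by (simp add: scalar_prod_def atLeast0LessThan)
  also have "\<dots> = s (i+2) - s 1"
    unfolding swap_lemma[where f="\<lambda>a j. \<phi> a (i+2) $ j" and g="\<lambda>a j. \<phi> a 1 $ j"] s_def scalar_prod_def
    using th by (simp add: atLeast0LessThan)
  finally show "(matB m n d \<phi> \<mu> *\<^sub>v \<theta>s) $ i = vecd n \<eta> \<nu> $ i"
    unfolding vecd_def using i r by simp
qed

lemma app_minus:
  fixes v1 v2 w1 w2 :: "real vec"
  assumes "v1 \<in> carrier_vec a" "v2 \<in> carrier_vec a" "w1 \<in> carrier_vec b" "w2 \<in> carrier_vec b"
  shows "(v1 @\<^sub>v w1) - (v2 @\<^sub>v w2) = (v1 - v2) @\<^sub>v (w1 - w2)"
  using assms by (intro eq_vecI) (auto simp: index_append_vec)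

lemma ln_ratio_bound:
  fixes x1 x2 y1 y2 q e \<eta> :: real
  assumes q: "q > 0" and "x1 \<ge> q" "x2 \<ge> q" "y1 \<ge> q" "y2 \<ge> q"
    and "\<bar>x1 - y1\<bar> \<le> e" "\<bar>x2 - y2\<bar> \<le> e" and eta: "\<eta> > 0"
  shows "\<bar>ln (x1 / x2) / \<eta> - ln (y1 / y2) / \<eta>\<bar> \<le> 2 * e / (q * \<eta>)"
proof -
  have pos: "x1 > 0" "x2 > 0" "y1 > 0" "y2 > 0" using assms by auto
  have b1: "\<bar>ln x1 - ln y1\<bar> \<le> e / q" using ln_diff_bound assms by blast
  have b2: "\<bar>ln x2 - ln y2\<bar> \<le> e / q" using ln_diff_bound assms by blast
  have "ln (x1 / x2) / \<eta> - ln (y1 / y2) / \<eta> = ((ln x1 - ln y1) - (ln x2 - ln y2)) / \<eta>"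
    using pos by (simp add: ln_div diff_divide_distrib)
  then have "\<bar>ln (x1 / x2) / \<eta> - ln (y1 / y2) / \<eta>\<bar> = \<bar>(ln x1 - ln y1) - (ln x2 - ln y2)\<bar> / \<eta>"
    using eta by simp
  also have "\<dots> \<le> (e / q + e / q) / \<eta>"
    using b1 b2 eta by (intro divide_right_mono) auto
  also have "\<dots> = 2 * e / (q * \<eta>)" by (simp add: field_simps)
  finally show ?thesis .
qed

lemma tv_sum:
  assumes "TV k p q \<le> e / 2"
  shows "(\<Sum>i\<in>{1..k}. \<bar>p i - q i\<bar>) \<le> e" "\<And>i. i \<in> {1..k} \<Longrightarrow> \<bar>p i - q i\<bar> \<le> e"
proof -
  show s: "(\<Sum>i\<in>{1..k}. \<bar>p i - q i\<bar>) \<le> e" using assms unfolding TV_def by simp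
  fix i assume "i \<in> {1..k}"
  then have "\<bar>p i - q i\<bar> \<le> (\<Sum>i\<in>{1..k}. \<bar>p i - q i\<bar>)" by (intro member_le_sum) auto
  then show "\<bar>p i - q i\<bar> \<le> e" using s by linarith
qed

lemma matA_carrier: "matA m n d \<phi> \<nu> \<in> carrier_mat (m - 1) d" unfolding matA_def by simp
lemma matB_carrier: "matB m n d \<phi> \<mu> \<in> carrier_mat (n - 1) d" unfolding matB_def by simp
lemma vecc_carrier: "vecc m \<eta> \<mu> \<in> carrier_vec (m - 1)" unfolding vecc_def by simp
lemma vecd_carrier: "vecd n \<eta> \<nu> \<in> carrier_vec (n - 1)" unfolding vecd_def by simp

lemma matA_entry_diff:
  assumes i: "i < m - 1" and j: "j < d" and Phi: "\<And>a b. a \<in> {1..m} \<Longrightarrow> b \<in> {1..n} \<Longrightarrow> \<bar>\<phi> a b $ j\<bar> \<le> P"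
    and tv: "(\<Sum>b\<in>{1..n}. \<bar>\<nu>1 b - \<nu>2 b\<bar>) \<le> e" and n: "n \<ge> 1"
  shows "\<bar>matA m n d \<phi> \<nu>1 $$ (i,j) - matA m n d \<phi> \<nu>2 $$ (i,j)\<bar> \<le> e * (2 * P)"
proof -
  have "matA m n d \<phi> \<nu>1 $$ (i,j) - matA m n d \<phi> \<nu>2 $$ (i,j)
      = (\<Sum>b\<in>{1..n}. (\<nu>1 b - \<nu>2 b) * (\<phi> (i + 2) b $ j - \<phi> 1 b $ j))"
    unfolding matA_def using i j by (simp add: sum_subtractf[symmetric] algebra_simps)
  also have "\<bar>\<dots>\<bar> \<le> (\<Sum>b\<in>{1..n}. \<bar>\<nu>1 b - \<nu>2 b\<bar>) * (2 * P)"
  proof (rule abs_sum_bound)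
    fix b assume b: "b \<in> {1..n}"
    have "\<bar>\<phi> (i + 2) b $ j\<bar> \<le> P" using Phi b i by auto
    moreover have "\<bar>\<phi> 1 b $ j\<bar> \<le> P" using Phi b i by auto
    ultimately show "\<bar>\<phi> (i + 2) b $ j - \<phi> 1 b $ j\<bar> \<le> 2 * P" by linarith
  qed simp
  also have "\<dots> \<le> e * (2 * P)"
  proof (rule mult_right_mono[OF tv])
    have "\<bar>\<phi> 1 1 $ j\<bar> \<le> P" using Phi[of 1 1] i n by auto
    then show "0 \<le> 2 * P" by linarith
  qed
  finally show ?thesis .
qed

lemma matB_entry_diff:
  assumes i: "i < n - 1" and j: "j < d" and Phi: "\<And>a b. a \<in> {1..m} \<Longrightarrow> b \<in> {1..n} \<Longrightarrow> \<bar>\<phi> a b $ j\<bar> \<le> P"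
    and tv: "(\<Sum>a\<in>{1..m}. \<bar>\<mu>1 a - \<mu>2 a\<bar>) \<le> e" and m: "m \<ge> 1"
  shows "\<bar>matB m n d \<phi> \<mu>1 $$ (i,j) - matB m n d \<phi> \<mu>2 $$ (i,j)\<bar> \<le> e * (2 * P)"
proof -
  have "matB m n d \<phi> \<mu>1 $$ (i,j) - matB m n d \<phi> \<mu>2 $$ (i,j)
      = (\<Sum>a\<in>{1..m}. (\<mu>1 a - \<mu>2 a) * (\<phi> a (i + 2) $ j - \<phi> a 1 $ j))"
    unfolding matB_def using i j by (simp add: sum_subtractf[symmetric] algebra_simps)
  also have "\<bar>\<dots>\<bar> \<le> (\<Sum>a\<in>{1..m}. \<bar>\<mu>1 a - \<mu>2 a\<bar>) * (2 * P)"
  proof (rule abs_sum_bound)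
    fix a assume a: "a \<in> {1..m}"
    have "\<bar>\<phi> a (i + 2) $ j\<bar> \<le> P" using Phi a i by auto
    moreover have "\<bar>\<phi> a 1 $ j\<bar> \<le> P" using Phi a i by auto
    ultimately show "\<bar>\<phi> a (i + 2) $ j - \<phi> a 1 $ j\<bar> \<le> 2 * P" by linarith
  qed simp
  also have "\<dots> \<le> e * (2 * P)"
  proof (rule mult_right_mono[OF tv])
    have "\<bar>\<phi> 1 1 $ j\<bar> \<le> P" using Phi[of 1 1] i m by auto
    then show "0 \<le> 2 * P" by linarith
  qed
  finally show ?thesis .
qed

theorem mainTheorem2:
  fixes m n d :: nat and \<eta> M :: real and \<phi> :: "nat \<Rightarrow> nat \<Rightarrow> real vec"
    and \<theta>s :: "real vec" and \<mu>s \<nu>s :: "nat \<Rightarrow> real"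
  assumes "m \<ge> 2" and "n \<ge> 2" and "\<eta> > 0"
    and phi_dim: "\<forall>a\<in>{1..m}. \<forall>b\<in>{1..n}. \<phi> a b \<in> carrier_vec d"
    and theta_dim: "\<theta>s \<in> carrier_vec d"
    and theta_bound: "sqnorm \<theta>s \<le> M"
    and qre: "is_QRE m n \<eta> (\<lambda>a b. \<phi> a b \<bullet> \<theta>s) \<mu>s \<nu>s"
    and rank: "vec_space.rank (m - 1 + (n - 1)) (matA m n d \<phi> \<nu>s @\<^sub>r matB m n d \<phi> \<mu>s) = d"
  shows "\<exists>\<epsilon>0 C. \<epsilon>0 > 0 \<and> C > 0 \<and>
    (\<forall>\<epsilon>1 \<epsilon>2 \<mu>h \<nu>h. 0 < \<epsilon>1 \<and> 0 < \<epsilon>2 \<and>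
       (\<forall>a\<in>{1..m}. \<epsilon>1 < \<mu>s a) \<and> (\<forall>b\<in>{1..n}. \<epsilon>2 < \<nu>s b) \<and>
       \<epsilon>1 \<le> \<epsilon>0 \<and> \<epsilon>2 \<le> \<epsilon>0 \<and>
       simplex m \<mu>h \<and> simplex n \<nu>h \<and>
       TV m \<mu>h \<mu>s \<le> \<epsilon>1 / 2 \<and> TV n \<nu>h \<nu>s \<le> \<epsilon>2 / 2 \<longrightarrow>
       (\<exists>!\<theta>. is_lsq_min m n d \<eta> \<phi> \<mu>h \<nu>h \<theta>) \<and>
       (\<forall>\<theta>h. is_lsq_min m n d \<eta> \<phi> \<mu>h \<nu>h \<theta>h \<longrightarrow>
          sqnorm (\<theta>h - \<theta>s) \<le> C * (\<epsilon>1\<^sup>2 * (1 + real m * (\<epsilon>2\<^sup>2 + 1))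
                                      + \<epsilon>2\<^sup>2 * (1 + real n * (\<epsilon>1\<^sup>2 + 1)))))"
proof -
  have m1: "m \<ge> 1" and n1: "n \<ge> 1" using assms(1,2) by auto
  have eta: "\<eta> > 0" by fact
  define N where "N = m - 1 + (n - 1)"
  define Ks where "Ks = matA m n d \<phi> \<nu>s @\<^sub>r matB m n d \<phi> \<mu>s"
  define bs where "bs = vecc m \<eta> \<mu>s @\<^sub>v vecd n \<eta> \<nu>s"
  have Ks: "Ks \<in> carrier_mat N d" unfolding Ks_def N_def
    using matA_carrier matB_carrier by blast
  have Ksbs: "Ks *\<^sub>v \<theta>s = bs" unfolding Ks_def bs_def
    using mat_mult_append[OF matA_carrier matB_carrier theta_dim]
      qre_A[OF qre m1 n1 eta theta_dim] qre_B[OF qre m1 n1 eta theta_dim] by simp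
  have injs: "\<forall>v\<in>carrier_vec d. Ks *\<^sub>v v = 0\<^sub>v N \<longrightarrow> v = 0\<^sub>v d"
    using rank_inj[OF Ks] rank unfolding N_def Ks_def by blast
  obtain lam where lam: "lam > 0" "\<forall>\<theta>\<in>carrier_vec d. lam * sqnorm \<theta> \<le> sqnorm (Ks *\<^sub>v \<theta>)"
    using inj_lower_bound[OF Ks injs] by blast
  have mupos: "\<forall>a\<in>{1..m}. \<mu>s a > 0" and nupos: "\<forall>b\<in>{1..n}. \<nu>s b > 0"
    using qre_pos[OF qre m1 n1] by auto
  define p where "p = Min (\<mu>s ` {1..m} \<union> \<nu>s ` {1..n})"
  have fin: "finite (\<mu>s ` {1..m} \<union> \<nu>s ` {1..n})" by simp
  have ne: "\<mu>s ` {1..m} \<union> \<nu>s ` {1..n} \<noteq> {}" using m1 by auto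
  have ppos: "p > 0" unfolding p_def using Min_gr_iff[OF fin ne] mupos nupos by auto
  have pmu: "p \<le> \<mu>s a" if "a \<in> {1..m}" for a unfolding p_def using fin that by (intro Min_le) auto
  have pnu: "p \<le> \<nu>s b" if "b \<in> {1..n}" for b unfolding p_def using fin that by (intro Min_le) auto
  define P where "P = (\<Sum>a\<in>{1..m}. \<Sum>b\<in>{1..n}. \<Sum>j<d. \<bar>\<phi> a b $ j\<bar>)"
  have Phi: "\<bar>\<phi> a b $ j\<bar> \<le> P" if "a \<in> {1..m}" "b \<in> {1..n}" "j < d" for a b j
  proof -
    have "\<bar>\<phi> a b $ j\<bar> \<le> (\<Sum>j<d. \<bar>\<phi> a b $ j\<bar>)" using that by (intro member_le_sum) auto
    also have "\<dots> \<le> (\<Sum>b\<in>{1..n}. \<Sum>j<d. \<bar>\<phi> a b $ j\<bar>)"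
      using that by (intro member_le_sum[where f="\<lambda>b. \<Sum>j<d. \<bar>\<phi> a b $ j\<bar>"]) (auto intro: sum_nonneg)
    also have "\<dots> \<le> P" unfolding P_def
      using that by (intro member_le_sum[where f="\<lambda>a. \<Sum>b\<in>{1..n}. \<Sum>j<d. \<bar>\<phi> a b $ j\<bar>"]) (auto intro: sum_nonneg)
    finally show ?thesis .
  qed
  have P0: "P \<ge> 0" unfolding P_def by (auto intro!: sum_nonneg)
  define D where "D = 4 * P^2 * real N * real d"
  define E where "E = 16 * real N / (\<eta> * p)^2"
  have D0: "D \<ge> 0" unfolding D_def by simp
  have E0: "E \<ge> 0" unfolding E_def by simp
  define e0 where "e0 = min (min 1 (p/2)) (lam / (16 * D + 1))"
  define C where "C = 16 / lam * (2 * D * sqnorm \<theta>s + 2 * E) + 1"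
  have e0pos: "e0 > 0" unfolding e0_def using ppos lam(1) D0 by (simp add: add_nonneg_pos)
  have Cpos: "C > 0" unfolding C_def using lam(1) D0 E0 sqnorm_nonneg[of \<theta>s]
    by (simp add: add_nonneg_pos)
  have main: "(\<exists>!\<theta>. is_lsq_min m n d \<eta> \<phi> \<mu>h \<nu>h \<theta>) \<and>
       (\<forall>\<theta>h. is_lsq_min m n d \<eta> \<phi> \<mu>h \<nu>h \<theta>h \<longrightarrow>
          sqnorm (\<theta>h - \<theta>s) \<le> C * (e1\<^sup>2 * (1 + real m * (e2\<^sup>2 + 1))
                                      + e2\<^sup>2 * (1 + real n * (e1\<^sup>2 + 1))))"
    if H: "0 < e1 \<and> 0 < e2 \<and>
       (\<forall>a\<in>{1..m}. e1 < \<mu>s a) \<and> (\<forall>b\<in>{1..n}. e2 < \<nu>s b) \<and>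
       e1 \<le> e0 \<and> e2 \<le> e0 \<and>
       simplex m \<mu>h \<and> simplex n \<nu>h \<and>
       TV m \<mu>h \<mu>s \<le> e1 / 2 \<and> TV n \<nu>h \<nu>s \<le> e2 / 2" for e1 e2 \<mu>h \<nu>h
  proof -
    have e1: "0 < e1" "e1 \<le> e0" and e2: "0 < e2" "e2 \<le> e0" using H by auto
    have tv1: "(\<Sum>i\<in>{1..m}. \<bar>\<mu>h i - \<mu>s i\<bar>) \<le> e1" "\<And>i. i \<in> {1..m} \<Longrightarrow> \<bar>\<mu>h i - \<mu>s i\<bar> \<le> e1"
      using tv_sum[of m \<mu>h \<mu>s e1] H by auto
    have tv2: "(\<Sum>i\<in>{1..n}. \<bar>\<nu>h i - \<nu>s i\<bar>) \<le> e2" "\<And>i. i \<in> {1..n} \<Longrightarrow> \<bar>\<nu>h i - \<nu>s i\<bar> \<le> e2"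
      using tv_sum[of n \<nu>h \<nu>s e2] H by auto
    have e0p: "e0 \<le> p / 2" "e0 \<le> 1" "e0 \<le> lam / (16 * D + 1)" unfolding e0_def
      by (meson min.cobounded1 min.cobounded2 order_trans)+
    have muh: "\<mu>h a \<ge> p / 2" if "a \<in> {1..m}" for a using tv1(2)[OF that] pmu[OF that] e1 e0p by linarith
    have nuh: "\<nu>h b \<ge> p / 2" if "b \<in> {1..n}" for b using tv2(2)[OF that] pnu[OF that] e2 e0p by linarith
    define Kh where "Kh = matA m n d \<phi> \<nu>h @\<^sub>r matB m n d \<phi> \<mu>h"
    define bh where "bh = vecc m \<eta> \<mu>h @\<^sub>v vecd n \<eta> \<nu>h"
    have Kh: "Kh \<in> carrier_mat N d" unfolding Kh_def N_def
      using matA_carrier matB_carrier by blast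
    have bh: "bh \<in> carrier_vec N" unfolding bh_def N_def using vecc_carrier vecd_carrier by blast
    have bs: "bs \<in> carrier_vec N" unfolding bs_def N_def using vecc_carrier vecd_carrier by blast
    have pert: "sqnorm (Kh *\<^sub>v \<theta> - Ks *\<^sub>v \<theta>) \<le> D * (e1^2 + e2^2) * sqnorm \<theta>"
      if th: "\<theta> \<in> carrier_vec d" for \<theta>
    proof -
      let ?A1 = "matA m n d \<phi> \<nu>h" and ?A2 = "matA m n d \<phi> \<nu>s"
      let ?B1 = "matB m n d \<phi> \<mu>h" and ?B2 = "matB m n d \<phi> \<mu>s"
      have "Kh *\<^sub>v \<theta> - Ks *\<^sub>v \<theta> = (?A1 *\<^sub>v \<theta> - ?A2 *\<^sub>v \<theta>) @\<^sub>v (?B1 *\<^sub>v \<theta> - ?B2 *\<^sub>v \<theta>)"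
      proof -
        have k1: "Kh *\<^sub>v \<theta> = ?A1 *\<^sub>v \<theta> @\<^sub>v ?B1 *\<^sub>v \<theta>"
          unfolding Kh_def by (rule mat_mult_append[OF matA_carrier matB_carrier th])
        have k2: "Ks *\<^sub>v \<theta> = ?A2 *\<^sub>v \<theta> @\<^sub>v ?B2 *\<^sub>v \<theta>"
          unfolding Ks_def by (rule mat_mult_append[OF matA_carrier matB_carrier th])
        have c: "?A1 *\<^sub>v \<theta> \<in> carrier_vec (m - 1)" "?A2 *\<^sub>v \<theta> \<in> carrier_vec (m - 1)"
          "?B1 *\<^sub>v \<theta> \<in> carrier_vec (n - 1)" "?B2 *\<^sub>v \<theta> \<in> carrier_vec (n - 1)"
          by (rule mult_mat_vec_carrier[OF matA_carrier th] mult_mat_vec_carrier[OF matB_carrier th])+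
        show ?thesis unfolding k1 k2 by (rule app_minus[OF c])
      qed
      then have "sqnorm (Kh *\<^sub>v \<theta> - Ks *\<^sub>v \<theta>) = sqnorm (?A1 *\<^sub>v \<theta> - ?A2 *\<^sub>v \<theta>) + sqnorm (?B1 *\<^sub>v \<theta> - ?B2 *\<^sub>v \<theta>)"
        by (simp add: sqnorm_append)
      also have "\<dots> \<le> real (m - 1) * real d * (e2 * (2 * P))^2 * sqnorm \<theta> + real (n - 1) * real d * (e1 * (2 * P))^2 * sqnorm \<theta>"
      proof (intro add_mono entry_bound_mat[OF matA_carrier matA_carrier th] entry_bound_mat[OF matB_carrier matB_carrier th])
        fix i j assume ij: "i < m - 1" "j < d"
        have Pj: "\<And>a b. a \<in> {1..m} \<Longrightarrow> b \<in> {1..n} \<Longrightarrow> \<bar>\<phi> a b $ j\<bar> \<le> P" using Phi ij(2) by blast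
        show "\<bar>?A1 $$ (i, j) - ?A2 $$ (i, j)\<bar> \<le> e2 * (2 * P)"
          by (rule matA_entry_diff[OF ij Pj tv2(1) n1])
      next
        fix i j assume ij: "i < n - 1" "j < d"
        have Pj: "\<And>a b. a \<in> {1..m} \<Longrightarrow> b \<in> {1..n} \<Longrightarrow> \<bar>\<phi> a b $ j\<bar> \<le> P" using Phi ij(2) by blast
        show "\<bar>?B1 $$ (i, j) - ?B2 $$ (i, j)\<bar> \<le> e1 * (2 * P)"
          by (rule matB_entry_diff[OF ij Pj tv1(1) m1])
      qed
      also have "\<dots> \<le> real N * real d * (e2 * (2 * P))^2 * sqnorm \<theta> + real N * real d * (e1 * (2 * P))^2 * sqnorm \<theta>"
        using sqnorm_nonneg[of \<theta>] unfolding N_def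
        by (intro add_mono mult_right_mono) auto
      also have "\<dots> = D * (e1^2 + e2^2) * sqnorm \<theta>"
        unfolding D_def by (simp add: power_mult_distrib algebra_simps)
      finally show ?thesis .
    qed
    have De: "D * (e1^2 + e2^2) \<le> lam / 8"
    proof -
      have sq: "x^2 \<le> e0" if "0 < x" "x \<le> e0" for x
      proof -
        have "x^2 \<le> x^1" using that e0p by (intro power_decreasing) auto
        then show ?thesis using that by simp
      qed
      have "D * (e1^2 + e2^2) \<le> D * (2 * e0)"
        using sq[OF e1] sq[OF e2] D0 by (intro mult_left_mono) auto
      also have "\<dots> \<le> D * (2 * (lam / (16 * D + 1)))"
        using e0p D0 by (intro mult_left_mono) auto
      also have "\<dots> = (2 * D * lam) / (16 * D + 1)" by simp
      also have "\<dots> \<le> lam / 8"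
      proof -
        have h: "16 * D + 1 > 0" using D0 by simp
        have "(2 * D * lam) * 8 \<le> lam * (16 * D + 1)" using lam(1) by (simp add: algebra_simps)
        then show ?thesis using h by (simp add: field_simps)
      qed
      finally show ?thesis .
    qed
    have lowh: "lam / 4 * sqnorm \<theta> \<le> sqnorm (Kh *\<^sub>v \<theta>)" if th: "\<theta> \<in> carrier_vec d" for \<theta>
    proof -
      have Kst: "Ks *\<^sub>v \<theta> \<in> carrier_vec N" using Ks th by simp
      have Kht: "Kh *\<^sub>v \<theta> \<in> carrier_vec N" using Kh th by simp
      have z1: "Ks *\<^sub>v \<theta> - 0\<^sub>v N = Ks *\<^sub>v \<theta>" using Kst by (intro eq_vecI) auto
      have z2: "Kh *\<^sub>v \<theta> - 0\<^sub>v N = Kh *\<^sub>v \<theta>" using Kht by (intro eq_vecI) auto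
      have "sqnorm (Ks *\<^sub>v \<theta> - 0\<^sub>v N) \<le> 2 * sqnorm (Ks *\<^sub>v \<theta> - Kh *\<^sub>v \<theta>) + 2 * sqnorm (Kh *\<^sub>v \<theta> - 0\<^sub>v N)"
        using sqnorm_tri[OF Kst Kht zero_carrier_vec] .
      then have t: "sqnorm (Ks *\<^sub>v \<theta>) \<le> 2 * sqnorm (Kh *\<^sub>v \<theta> - Ks *\<^sub>v \<theta>) + 2 * sqnorm (Kh *\<^sub>v \<theta>)"
        unfolding z1 z2 sqnorm_minus_comm[OF Kst Kht] .
      have "sqnorm (Kh *\<^sub>v \<theta> - Ks *\<^sub>v \<theta>) \<le> D * (e1^2 + e2^2) * sqnorm \<theta>" by (rule pert[OF th])
      also have "\<dots> \<le> lam / 8 * sqnorm \<theta>" using De sqnorm_nonneg[of \<theta>] by (rule mult_right_mono)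
      finally have p1: "sqnorm (Kh *\<^sub>v \<theta> - Ks *\<^sub>v \<theta>) \<le> lam / 8 * sqnorm \<theta>" .
      have l: "lam * sqnorm \<theta> \<le> sqnorm (Ks *\<^sub>v \<theta>)" using lam(2) th by blast
      have nn: "0 \<le> lam * sqnorm \<theta>" using lam(1) sqnorm_nonneg[of \<theta>] by simp
      have "lam * sqnorm \<theta> \<le> lam / 4 * sqnorm \<theta> + 2 * sqnorm (Kh *\<^sub>v \<theta>)" using t p1 l by simp
      then show ?thesis using nn by simp
    qed
    have injh: "\<forall>v\<in>carrier_vec d. Kh *\<^sub>v v = 0\<^sub>v N \<longrightarrow> v = 0\<^sub>v d"
    proof (intro ballI impI)
      fix v :: "real vec" assume v: "v \<in> carrier_vec d" and z: "Kh *\<^sub>v v = 0\<^sub>v N"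
      have "sqnorm (Kh *\<^sub>v v) = 0" unfolding z using sqnorm_zero_iff[of "0\<^sub>v N :: real vec"] by simp
      then have "lam / 4 * sqnorm v \<le> 0" using lowh[OF v] by simp
      then have "sqnorm v \<le> 0" using lam(1) by (simp add: mult_le_0_iff)
      then have "sqnorm v = 0" using sqnorm_nonneg[of v] by linarith
      then show "v = 0\<^sub>v d" using sqnorm_zero_iff[of v] v by simp
    qed
    have islsq: "is_lsq_min m n d \<eta> \<phi> \<mu>h \<nu>h \<theta> \<longleftrightarrow> \<theta> \<in> carrier_vec d \<and>
        (\<forall>\<theta>'\<in>carrier_vec d. sqnorm (Kh *\<^sub>v \<theta> - bh) \<le> sqnorm (Kh *\<^sub>v \<theta>' - bh))" for \<theta>
      unfolding is_lsq_min_def lsq_obj_def Kh_def bh_def ..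
    have U: "\<exists>!\<theta>. is_lsq_min m n d \<eta> \<phi> \<mu>h \<nu>h \<theta>"
      unfolding islsq by (rule lsq_unique[OF Kh injh bh])
    have B: "\<forall>\<theta>h. is_lsq_min m n d \<eta> \<phi> \<mu>h \<nu>h \<theta>h \<longrightarrow>
          sqnorm (\<theta>h - \<theta>s) \<le> C * (e1\<^sup>2 * (1 + real m * (e2\<^sup>2 + 1))
                                      + e2\<^sup>2 * (1 + real n * (e1\<^sup>2 + 1)))"
    proof (intro allI impI)
      fix \<theta>h assume "is_lsq_min m n d \<eta> \<phi> \<mu>h \<nu>h \<theta>h"
      then have th: "\<theta>h \<in> carrier_vec d" and mn: "sqnorm (Kh *\<^sub>v \<theta>h - bh) \<le> sqnorm (Kh *\<^sub>v \<theta>s - bh)"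
        unfolding islsq using theta_dim by auto
      have Khh: "Kh *\<^sub>v \<theta>h \<in> carrier_vec N" using Kh th by simp
      have Khs: "Kh *\<^sub>v \<theta>s \<in> carrier_vec N" using Kh theta_dim by simp
      have Kss: "Ks *\<^sub>v \<theta>s \<in> carrier_vec N" using Ks theta_dim by simp
      have c1: "sqnorm (Kh *\<^sub>v (\<theta>h - \<theta>s)) \<le> 4 * sqnorm (Kh *\<^sub>v \<theta>s - bh)"
      proof -
        have "Kh *\<^sub>v (\<theta>h - \<theta>s) = Kh *\<^sub>v \<theta>h - Kh *\<^sub>v \<theta>s" by (rule mult_minus_distrib_mat_vec[OF Kh th theta_dim])
        then have "sqnorm (Kh *\<^sub>v (\<theta>h - \<theta>s)) \<le> 2 * sqnorm (Kh *\<^sub>v \<theta>h - bh) + 2 * sqnorm (bh - Kh *\<^sub>v \<theta>s)"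
          using sqnorm_tri[OF Khh bh Khs] by simp
        then show ?thesis using mn sqnorm_minus_comm[OF bh Khs] by simp
      qed
      have bbd: "sqnorm (bh - bs) \<le> E * (e1^2 + e2^2)"
      proof -
        let ?c1 = "vecc m \<eta> \<mu>h" and ?c2 = "vecc m \<eta> \<mu>s" and ?d1 = "vecd n \<eta> \<nu>h" and ?d2 = "vecd n \<eta> \<nu>s"
        have "bh - bs = (?c1 - ?c2) @\<^sub>v (?d1 - ?d2)" unfolding bh_def bs_def
          by (rule app_minus[OF vecc_carrier vecc_carrier vecd_carrier vecd_carrier])
        then have "sqnorm (bh - bs) = sqnorm (?c1 - ?c2) + sqnorm (?d1 - ?d2)" by (simp add: sqnorm_append)
        also have "\<dots> \<le> real (m - 1) * (2 * e1 / (p / 2 * \<eta>))^2 + real (n - 1) * (2 * e2 / (p / 2 * \<eta>))^2"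
        proof (intro add_mono entry_bound_vec[OF vecc_carrier vecc_carrier] entry_bound_vec[OF vecd_carrier vecd_carrier])
          fix i assume i: "i < m - 1"
          have a: "i + 2 \<in> {1..m}" "1 \<in> {1..m}" using i m1 by auto
          have "\<bar>ln (\<mu>h (i + 2) / \<mu>h 1) / \<eta> - ln (\<mu>s (i + 2) / \<mu>s 1) / \<eta>\<bar> \<le> 2 * e1 / (p / 2 * \<eta>)"
            using ppos muh[OF a(1)] muh[OF a(2)] pmu[OF a(1)] pmu[OF a(2)] tv1(2)[OF a(1)] tv1(2)[OF a(2)] eta
            by (intro ln_ratio_bound) auto
          then show "\<bar>?c1 $ i - ?c2 $ i\<bar> \<le> 2 * e1 / (p / 2 * \<eta>)" unfolding vecc_def using i by simp
        next
          fix i assume i: "i < n - 1"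
          have a: "i + 2 \<in> {1..n}" "1 \<in> {1..n}" using i n1 by auto
          have "\<bar>ln (\<nu>h (i + 2) / \<nu>h 1) / \<eta> - ln (\<nu>s (i + 2) / \<nu>s 1) / \<eta>\<bar> \<le> 2 * e2 / (p / 2 * \<eta>)"
            using ppos nuh[OF a(1)] nuh[OF a(2)] pnu[OF a(1)] pnu[OF a(2)] tv2(2)[OF a(1)] tv2(2)[OF a(2)] eta
            by (intro ln_ratio_bound) auto
          then show "\<bar>?d1 $ i - ?d2 $ i\<bar> \<le> 2 * e2 / (p / 2 * \<eta>)" unfolding vecd_def using i
            by (simp add: abs_minus_commute)
        qed
        also have "\<dots> \<le> real N * (16 / (\<eta> * p)^2) * e1^2 + real N * (16 / (\<eta> * p)^2) * e2^2"
        proof -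
          have q: "(2 * x / (p / 2 * \<eta>))^2 = (16 / (\<eta> * p)^2) * x^2" for x
            using ppos eta by (simp add: field_simps power2_eq_square)
          have nn: "0 \<le> (16 / (\<eta> * p)^2) * x^2" for x by simp
          show ?thesis unfolding q mult.assoc[symmetric] using nn unfolding N_def
            by (intro add_mono mult_right_mono) auto
        qed
        also have "\<dots> = E * (e1^2 + e2^2)" unfolding E_def using ppos eta by (simp add: field_simps)
        finally show ?thesis .
      qed
      have c2: "sqnorm (Kh *\<^sub>v \<theta>s - bh) \<le> (2 * D * sqnorm \<theta>s + 2 * E) * (e1^2 + e2^2)"
      proof -
        have "sqnorm (Kh *\<^sub>v \<theta>s - bh) \<le> 2 * sqnorm (Kh *\<^sub>v \<theta>s - Ks *\<^sub>v \<theta>s) + 2 * sqnorm (Ks *\<^sub>v \<theta>s - bh)"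
          by (rule sqnorm_tri[OF Khs Kss bh])
        also have "sqnorm (Ks *\<^sub>v \<theta>s - bh) = sqnorm (bh - bs)" unfolding Ksbs by (rule sqnorm_minus_comm[OF bs bh])
        finally show ?thesis using pert[OF theta_dim] bbd by (simp add: algebra_simps)
      qed
      define W where "W = 2 * D * sqnorm \<theta>s + 2 * E"
      define S where "S = e1^2 + e2^2"
      have W0: "W \<ge> 0" unfolding W_def using D0 E0 sqnorm_nonneg[of \<theta>s] by simp
      have S0: "S \<ge> 0" unfolding S_def by simp
      have dlt: "\<theta>h - \<theta>s \<in> carrier_vec d" using th theta_dim by simp
      have "lam / 4 * sqnorm (\<theta>h - \<theta>s) \<le> 4 * (W * S)"
        using lowh[OF dlt] c1 c2 unfolding W_def S_def by linarith
      then have f1: "sqnorm (\<theta>h - \<theta>s) \<le> 16 / lam * W * S" using lam(1) by (simp add: field_simps)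
      have "16 / lam * W * S \<le> C * S" unfolding C_def using S0 by (simp add: W_def distrib_right)
      also have "C * S \<le> C * (e1\<^sup>2 * (1 + real m * (e2\<^sup>2 + 1)) + e2\<^sup>2 * (1 + real n * (e1\<^sup>2 + 1)))"
      proof (rule mult_left_mono)
        have "e1^2 \<le> e1\<^sup>2 * (1 + real m * (e2\<^sup>2 + 1))"
          by (simp add: mult_le_cancel_left1)
        moreover have "e2^2 \<le> e2\<^sup>2 * (1 + real n * (e1\<^sup>2 + 1))"
          by (simp add: mult_le_cancel_left1)
        ultimately show "S \<le> e1\<^sup>2 * (1 + real m * (e2\<^sup>2 + 1)) + e2\<^sup>2 * (1 + real n * (e1\<^sup>2 + 1))"
          unfolding S_def by linarith
      qed (use Cpos in simp)
      finally show "sqnorm (\<theta>h - \<theta>s) \<le> C * (e1\<^sup>2 * (1 + real m * (e2\<^sup>2 + 1)) + e2\<^sup>2 * (1 + real n * (e1\<^sup>2 + 1)))"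
        using f1 by linarith
    qed
    show ?thesis using U B by blast
  qed
  show ?thesis using e0pos Cpos main by blast
qed


end
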